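(* For $i,j\in I^+$ with $i\le j$, $[\mathfrak X_{-j_R},[\mathfrak D_j,\Psi_i]_q]=0$ as operators on $\mathcal X$.
   Context: Let $\mathbf{k}$ be a field of characteristic $0$, $q\in\mathbf{k}$ invertible and not a root of unity, $n\ge2$, $I=\{-n,\dots,-1,1,\dots,n\}$, $I^+=\{1,\dots,n\}$, $\lambda=q-q^{-1}$, $[m]_q=\frac{q^m-q^{-m}}{q-q^{-1}}$, $[A,B]_v=AB-vBA$, $[A,B]=[A,B]_1$. The quantum symplectic space $\mathcal X$ is the $\mathbf{k}$-algebra generated by $x_i$ ($i\in I$) with relations $x_jx_i=qx_ix_j$ for $i<j$, $j\neq-i$, and $x_ix_{-i}=q^2x_{-i}x_i+q^2\lambda\Omega_{i+1}$ ($i\in I^+$), $\Omega_i=\sum_{j=i}^nq^{j-i}x_{-j}x_j$, $\Omega_{n+1}=0$; normal monomials $x^a=x_{-n}^{a_{-n}}\cdots x_{-1}^{a_{-1}}x_1^{a_1}\cdots x_n^{a_n}$ form a basis. Linear operators: $\partial_i.x^a=[a_i]_qx^{a-\varepsilon_i}$, $x_{i_L}.f=x_if$, $x_{i_R}.f=fx_i$, $\mu_i^{\pm1}.x^a=q^{\pm a_i}x^a$ ($i\in I$); products are compositions (rightmost first). For $i\in I^+$: $\tau_i=\prod_{j=i}^n\mu_j$, $\tau_{-i}=\prod_{j=-n}^{-i}\mu_j$, $\tau_{\pm(n+1)}=1$, $\Lambda_0=1$, $\Lambda_{-i}=\prod_{j=-i}^{-1}\mu_j$, $\Lambda_i=\prod_{j=1}^i\mu_j$,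 $\mathfrak D_{-i}=\mu_i\tau_{-i-1}^{-1}\partial_{-i}$, $\mathfrak D_i=\tau_1^{-1}\Lambda_{i-1}^{-1}\partial_i$, $\mathfrak X_{-i_L}=\mu_i^{-1}\mu_{-i}x_{-i_L}$, $\mathfrak X_{i_R}=\Lambda_i^2x_{i_R}$, $\Psi_{n+1}=0$, $\Psi_i=\tau_{-i}^2\sum_{j=i}^nq^{j-i}\tau_{-j}^{-2}\mathfrak X_{-j_L}\mathfrak X_{j_R}$, and $\mathfrak X_{-i_R}=q^i\Lambda_{1-i}^2(\mu_i^2\mathfrak X_{-i_L}+\lambda\mu_{-i}^2\Psi_{i+1}\mathfrak D_i)$. *)

theory Defs
  imports Main
begin

text \<open>
  Model of the quantum symplectic space X: an element is given by its coordinates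
  with respect to the normal-monomial basis x^a.  Exponent vectors are functions
  a :: int => nat (only the entries at indices in I = {-n..-1} \<union> {1..n} matter).
\<close>

type_synonym 'k elt = "(int \<Rightarrow> nat) \<Rightarrow> 'k"
type_synonym 'k op = "'k elt \<Rightarrow> 'k elt"

definition Iset :: "nat \<Rightarrow> int set" where
  "Iset n = {-int n..-1} \<union> {1..int n}"

definition Xspace :: "nat \<Rightarrow> 'k::zero elt set" where
  "Xspace n = {f. finite {a. f a \<noteq> 0} \<and> (\<forall>a. f a \<noteq> 0 \<longrightarrow> (\<forall>k. k \<notin> Iset n \<longrightarrow> a k = 0))}"

definition qint :: "'k::field \<Rightarrow> int \<Rightarrow> 'k" where
  "qint q m = (q powi m - q powi (-m)) / (q - inverse q)"

definition mu :: "'k::field \<Rightarrow> int \<Rightarrow> int \<Rightarrow> 'k op" where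
  "mu q i m f = (\<lambda>b. q powi (m * int (b i)) * f b)"

definition prodmu :: "'k::field \<Rightarrow> int list \<Rightarrow> int \<Rightarrow> 'k op" where
  "prodmu q js m = foldr (\<lambda>j F. mu q j m \<circ> F) js id"

definition tau :: "'k::field \<Rightarrow> nat \<Rightarrow> int \<Rightarrow> int \<Rightarrow> 'k op" where
  "tau q n t m = prodmu q (if t > 0 then [t..int n] else [-int n..t]) m"

definition Lam :: "'k::field \<Rightarrow> int \<Rightarrow> int \<Rightarrow> 'k op" where
  "Lam q t m = prodmu q (if t \<ge> 0 then [1..t] else [t..-1]) m"

definition qpartial :: "'k::field \<Rightarrow> int \<Rightarrow> 'k op" where
  "qpartial q i f = (\<lambda>b. qint q (int (b i) + 1) * f (b(i := b i + 1)))"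

text \<open>Left multiplication by x_{-j} (j in I^+): by the relations x_{-j} x_{-k} = q x_{-k} x_{-j}
  for k > j, one has x_{-j} x^a = q^(sum_{k=j+1}^n a_{-k}) x^(a + eps_{-j}).\<close>
definition xLneg :: "'k::field \<Rightarrow> nat \<Rightarrow> int \<Rightarrow> 'k op" where
  "xLneg q n j f = (\<lambda>b. if b (-j) \<ge> 1
      then q ^ (\<Sum>k\<in>{j+1..int n}. b (-k)) * f (b(-j := b (-j) - 1)) else 0)"

text \<open>Right multiplication by x_j (j in I^+): by the relations x_k x_j = q x_j x_k for k > j,
  one has x^a x_j = q^(sum_{k=j+1}^n a_k) x^(a + eps_j).\<close>
definition xRpos :: "'k::field \<Rightarrow> nat \<Rightarrow> int \<Rightarrow> 'k op" where
  "xRpos q n j f = (\<lambda>b. if b j \<ge> 1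
      then q ^ (\<Sum>k\<in>{j+1..int n}. b k) * f (b(j := b j - 1)) else 0)"

definition fD :: "'k::field \<Rightarrow> nat \<Rightarrow> int \<Rightarrow> 'k op" where
  "fD q n j = tau q n 1 (-1) \<circ> Lam q (j - 1) (-1) \<circ> qpartial q j"

definition fXnegL :: "'k::field \<Rightarrow> nat \<Rightarrow> int \<Rightarrow> 'k op" where
  "fXnegL q n j = mu q j (-1) \<circ> mu q (-j) 1 \<circ> xLneg q n j"

definition fXposR :: "'k::field \<Rightarrow> nat \<Rightarrow> int \<Rightarrow> 'k op" where
  "fXposR q n j = Lam q j 2 \<circ> xRpos q n j"

definition Psi :: "'k::field \<Rightarrow> nat \<Rightarrow> int \<Rightarrow> 'k op" where
  "Psi q n i = (if i = int n + 1 then (\<lambda>f b. 0) else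
     tau q n (-i) 2 \<circ>
       (\<lambda>f b. \<Sum>j\<in>{i..int n}. q ^ nat (j - i) *
                 (tau q n (-j) (-2) \<circ> fXnegL q n j \<circ> fXposR q n j) f b))"

definition fXnegR :: "'k::field \<Rightarrow> nat \<Rightarrow> int \<Rightarrow> 'k op" where
  "fXnegR q n j = (\<lambda>f b. q ^ nat j *
     Lam q (1 - j) 2
       (\<lambda>b'. (mu q j 2 \<circ> fXnegL q n j) f b'
            + (q - inverse q) * (mu q (-j) 2 \<circ> Psi q n (j + 1) \<circ> fD q n j) f b') b)"

definition qcomm :: "'k::field \<Rightarrow> 'k op \<Rightarrow> 'k op \<Rightarrow> 'k op" where
  "qcomm v A B = (\<lambda>f b. A (B f) b - v * B (A f) b)"

end

theory Submission
  imports Defs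
begin

type_synonym ivec = "int \<Rightarrow> int"

definition nn :: "ivec \<Rightarrow> bool" where "nn a \<longleftrightarrow> (\<forall>x. 0 \<le> a x)"
definition vadd :: "ivec \<Rightarrow> ivec \<Rightarrow> ivec" where "vadd a s = (\<lambda>x. a x + s x)"
definition dl :: "int \<Rightarrow> ivec" where "dl m = (\<lambda>x. if x = m then 1 else 0)"
definition mop :: "(ivec \<Rightarrow> 'k::field) \<Rightarrow> ivec \<Rightarrow> 'k op" where
  "mop c s f b = (if nn (\<lambda>x. int (b x) - s x) then c (\<lambda>x. int (b x) - s x) * f (\<lambda>x. nat (int (b x) - s x)) else 0)"
definition wf :: "(ivec \<Rightarrow> 'k::field) \<Rightarrow> ivec \<Rightarrow> bool" where
  "wf c s \<longleftrightarrow> (\<forall>a. nn a \<longrightarrow> \<not> nn (vadd a s) \<longrightarrow> c a = 0)"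

lemma mop_comp:
  assumes "wf c2 s2"
  shows "mop c1 s1 (mop c2 s2 f) = mop (\<lambda>a. c2 a * c1 (vadd a s2)) (vadd s1 s2) f"
proof (rule ext)
  fix b :: "int \<Rightarrow> nat"
  define a1 where "a1 = (\<lambda>x. int (b x) - s1 x)"
  define a where "a = (\<lambda>x. int (b x) - vadd s1 s2 x)"
  have va: "vadd a s2 = a1" by (auto simp: a_def a1_def vadd_def)
  have L: "mop c1 s1 g b = (if nn a1 then c1 a1 * g (\<lambda>x. nat (a1 x)) else 0)" for g
    by (simp add: mop_def a1_def)
  have R: "mop c (vadd s1 s2) f b = (if nn a then c a * f (\<lambda>x. nat (a x)) else 0)" for c
    by (simp add: mop_def a_def)
  show "mop c1 s1 (mop c2 s2 f) b = mop (\<lambda>a. c2 a * c1 (vadd a s2)) (vadd s1 s2) f b"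
  proof (cases "nn a1")
    case True
    have e1: "(\<lambda>x. int (nat (a1 x)) - s2 x) = a" using True
      by (auto simp: a_def a1_def vadd_def nn_def)
    have "mop c2 s2 f (\<lambda>x. nat (a1 x)) = (if nn a then c2 a * f (\<lambda>x. nat (a x)) else 0)"
      unfolding mop_def e1 by (simp add: e1[symmetric])
    then show ?thesis using True unfolding L R va by simp
  next
    case False
    have "c2 a = 0" if "nn a" using assms that False va unfolding wf_def by metis
    then show ?thesis using False unfolding L R by simp
  qed
qed

lemma wf_nonneg: "(\<And>x. 0 \<le> s x) \<Longrightarrow> wf c s"
  by (auto simp: wf_def nn_def vadd_def add_nonneg_nonneg)

lemma mop_sum: "mop c s (\<lambda>b. \<Sum>k\<in>K. g k b) b0 = (\<Sum>k\<in>K. mop c s (g k) b0)"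
  by (simp add: mop_def sum_distrib_left)

lemma mop_cong: "(\<And>a. nn a \<Longrightarrow> c a = c' a) \<Longrightarrow> mop c s = mop c' s"
  by (intro ext) (simp add: mop_def)

lemma mop_zero: "(\<And>a. nn a \<Longrightarrow> c a = 0) \<Longrightarrow> mop c s f b = 0"
  by (simp add: mop_def)

lemma mop_lin: "mop c s f b - v * mop c' s f b = mop (\<lambda>a. c a - v * c' a) s f b"
  by (simp add: mop_def algebra_simps)

lemma mop_scal: "v * mop c s f b = mop (\<lambda>a. v * c a) s f b"
  by (simp add: mop_def algebra_simps)

lemma mop_add: "mop c s f b + mop c' s f b = mop (\<lambda>a. c a + c' a) s f b"
  by (simp add: mop_def algebra_simps)

lemma mu_mop: "mu q x m = mop (\<lambda>a. q powi (m * a x)) (\<lambda>_. 0)"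
  by (intro ext) (simp add: mu_def mop_def nn_def)

lemma prodmu_mop:
  assumes "(q::'k::field) \<noteq> 0" "distinct js"
  shows "prodmu q js m = mop (\<lambda>a. q powi (m * (\<Sum>x\<in>set js. a x))) (\<lambda>_. 0)"
  using assms(2)
proof (induction js)
  case Nil
  then show ?case by (intro ext) (simp add: prodmu_def mop_def nn_def)
next
  case (Cons y js)
  have "prodmu q (y # js) m = mu q y m \<circ> prodmu q js m" by (simp add: prodmu_def)
  also have "\<dots> = mop (\<lambda>a. q powi (m * (\<Sum>x\<in>set (y#js). a x))) (\<lambda>_. 0)"
    using Cons assms(1)
    by (intro ext) (simp add: mu_mop mop_comp wf_nonneg vadd_def power_int_add distrib_left mult.commute)
  finally show ?case .
qed

lemma tau_mop:
  assumes "(q::'k::field) \<noteq> 0"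
  shows "tau q n t m = mop (\<lambda>a. q powi (m * (\<Sum>x\<in>(if 0 < t then {t..int n} else {-int n..t}). a x))) (\<lambda>_. 0)"
  unfolding tau_def using prodmu_mop[OF assms] by (cases "0 < t") auto

lemma Lam_mop:
  assumes "(q::'k::field) \<noteq> 0"
  shows "Lam q t m = mop (\<lambda>a. q powi (m * (\<Sum>x\<in>(if 0 \<le> t then {1..t} else {t..-1}). a x))) (\<lambda>_. 0)"
  unfolding Lam_def using prodmu_mop[OF assms] by (cases "0 \<le> t") auto

lemma qint0[simp]: "qint q 0 = 0" by (simp add: qint_def)

lemma qpartial_mop: "qpartial q x = mop (\<lambda>a. qint q (a x)) (\<lambda>y. - dl x y)"
proof (intro ext)
  fix f :: "'a elt" and b :: "int \<Rightarrow> nat"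
  have e: "(\<lambda>y. nat (int (b y) - - dl x y)) = b(x := b x + 1)"
    by (auto simp: dl_def fun_eq_iff)
  show "qpartial q x f b = mop (\<lambda>a. qint q (a x)) (\<lambda>y. - dl x y) f b"
    unfolding mop_def e by (simp add: qpartial_def nn_def dl_def)
qed

lemma wf_qpartial: "wf (\<lambda>a. qint q (a x) * c a) (\<lambda>y. - dl x y)"
  unfolding wf_def nn_def vadd_def dl_def
proof (intro allI impI)
  fix a :: ivec assume h1: "\<forall>x. 0 \<le> a x" and h2: "\<not> (\<forall>xa. 0 \<le> a xa + - (if xa = x then 1 else 0))"
  then obtain y where "a y + - (if y = x then 1 else 0) < 0" by (meson not_le)
  with h1 have "a x = 0"
  proof (cases "y = x")
    case True
    with \<open>a y + - (if y = x then 1 else 0) < 0\<close> h1 show ?thesis by (smt (verit))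
  next
    case False
    with \<open>a y + - (if y = x then 1 else 0) < 0\<close> h1 show ?thesis by (smt (verit))
  qed
  then show "qint q (a x) * c a = 0" by simp
qed

lemma xLneg_mop:
  assumes "1 \<le> k"
  shows "xLneg q n k = mop (\<lambda>a. q powi (\<Sum>l\<in>{k+1..int n}. a (-l))) (dl (-k))"
proof (intro ext)
  fix f :: "'a elt" and b :: "int \<Rightarrow> nat"
  have e: "(\<lambda>y. nat (int (b y) - dl (-k) y)) = b(-k := b (-k) - 1)"
    by (auto simp: dl_def fun_eq_iff)
  have nnc: "nn (\<lambda>y. int (b y) - dl (-k) y) \<longleftrightarrow> 1 \<le> b (-k)"
    by (auto simp: nn_def dl_def)
  have s: "(\<Sum>l\<in>{k+1..int n}. int (b (-l)) - dl (-k) (-l)) = int (\<Sum>l\<in>{k+1..int n}. b (-l))"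
    by (auto simp: dl_def intro!: sum.cong)
  show "xLneg q n k f b = mop (\<lambda>a. q powi (\<Sum>l\<in>{k+1..int n}. a (-l))) (dl (-k)) f b"
    unfolding mop_def e nnc s by (simp add: xLneg_def power_int_of_nat flip: of_nat_sum)
qed

lemma xRpos_mop:
  assumes "1 \<le> k"
  shows "xRpos q n k = mop (\<lambda>a. q powi (\<Sum>l\<in>{k+1..int n}. a l)) (dl k)"
proof (intro ext)
  fix f :: "'a elt" and b :: "int \<Rightarrow> nat"
  have e: "(\<lambda>y. nat (int (b y) - dl k y)) = b(k := b k - 1)"
    by (auto simp: dl_def fun_eq_iff)
  have nnc: "nn (\<lambda>y. int (b y) - dl k y) \<longleftrightarrow> 1 \<le> b k"
    by (auto simp: nn_def dl_def)
  have s: "(\<Sum>l\<in>{k+1..int n}. int (b l) - dl k l) = int (\<Sum>l\<in>{k+1..int n}. b l)"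
    by (auto simp: dl_def intro!: sum.cong)
  show "xRpos q n k f b = mop (\<lambda>a. q powi (\<Sum>l\<in>{k+1..int n}. a l)) (dl k) f b"
    unfolding mop_def e nnc s by (simp add: xRpos_def power_int_of_nat flip: of_nat_sum)
qed

lemma wf_j:
  assumes "\<And>x. x \<noteq> j \<Longrightarrow> 0 \<le> s x" "-1 \<le> s j" "\<And>a. a j = 0 \<Longrightarrow> c a = 0"
  shows "wf c s"
  unfolding wf_def
proof (intro allI impI)
  fix a assume h1: "nn a" and h2: "\<not> nn (vadd a s)"
  then obtain y where y: "a y + s y < 0" unfolding nn_def vadd_def by (meson not_le)
  have "y = j" using y h1 assms(1)[of y] unfolding nn_def by (metis add_nonneg_nonneg not_le)
  then have "a j = 0" using y h1 assms(2) unfolding nn_def by (smt (verit))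
  then show "c a = 0" by (rule assms(3))
qed

lemma diag: "mop c (\<lambda>_. 0) h b = c (\<lambda>x. int (b x)) * h b"
  by (simp add: mop_def nn_def)

lemma vadd0[simp]: "vadd a (\<lambda>_. 0) = a" "vadd (\<lambda>_. 0) a = a"
  by (simp_all add: vadd_def)

lemma mpow: "(q::'k::field) \<noteq> 0 \<Longrightarrow> (A * q powi x) * (B * q powi y) = (A * B) * q powi (x + y)"
  by (simp add: power_int_add)

lemma sum_dl: "finite S \<Longrightarrow> (\<Sum>x\<in>S. dl m x) = (if m \<in> S then 1 else 0)"
  by (simp add: dl_def)
lemma sum_dl_neg: "finite S \<Longrightarrow> (\<Sum>x\<in>S. dl m (- x)) = (if -m \<in> S then 1 else 0)"
proof -
  assume "finite S"
  have "(\<Sum>x\<in>S. dl m (- x)) = (\<Sum>x\<in>S. if x = -m then 1 else 0)" by (rule sum.cong) (auto simp: dl_def)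
  then show ?thesis using \<open>finite S\<close> by simp
qed

definition nonneg :: "ivec \<Rightarrow> bool" where "nonneg s \<longleftrightarrow> (\<forall>x. 0 \<le> s x)"
lemma nonneg_simps[simp]: "nonneg (\<lambda>_. 0)" "nonneg (dl m)"
  "nonneg s \<Longrightarrow> nonneg t \<Longrightarrow> nonneg (vadd s t)"
  by (auto simp: nonneg_def dl_def vadd_def)
lemma wf_nn[simp]: "nonneg s \<Longrightarrow> wf c s"
  by (rule wf_nonneg) (simp add: nonneg_def)
lemma wf_qp[simp]: "wf (\<lambda>a. qint q (a j)) (\<lambda>y. - dl j y)"
  by (rule wf_j[of j]) (auto simp: dl_def)

lemma mop_comp_o: "wf c2 s2 \<Longrightarrow> mop c1 s1 \<circ> mop c2 s2 = mop (\<lambda>a. c2 a * c1 (vadd a s2)) (vadd s1 s2)"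
  by (simp add: fun_eq_iff mop_comp)

definition cD :: "'k::field \<Rightarrow> nat \<Rightarrow> int \<Rightarrow> ivec \<Rightarrow> 'k" where
  "cD q n j a = qint q (a j) * q powi (1 - (\<Sum>x\<in>{1..j-1}. a x) - (\<Sum>x\<in>{1..int n}. a x))"

lemma fD_mop:
  assumes q0: "(q::'k::field) \<noteq> 0" and j: "1 \<le> j" "j \<le> int n"
  shows "fD q n j = mop (cD q n j) (\<lambda>y. - dl j y)"
proof -
  have "fD q n j = mop (\<lambda>a. qint q (a j) * (q powi (- 1 * (\<Sum>x\<in>{1..j-1}. vadd a (\<lambda>y. - dl j y) x))
       * q powi (- 1 * (\<Sum>x\<in>{1..int n}. vadd a (\<lambda>y. - dl j y) x)))) (\<lambda>y. - dl j y)"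
    using j by (simp add: fD_def tau_mop[OF q0] Lam_mop[OF q0] qpartial_mop mop_comp_o)
  also have "\<dots> = mop (cD q n j) (\<lambda>y. - dl j y)"
    using q0 j by (intro mop_cong) (simp add: cD_def vadd_def sum.distrib sum_subtractf sum_negf sum_dl power_int_add[symmetric] mult.assoc algebra_simps)
  finally show ?thesis .
qed

definition cUe :: "nat \<Rightarrow> int \<Rightarrow> ivec \<Rightarrow> int" where
  "cUe n k a = (\<Sum>x\<in>{k+1..int n}. a x) + 2 * (\<Sum>x\<in>{1..k}. a x) - a k
     + (\<Sum>l\<in>{k+1..int n}. a (-l)) + a (-k) - 2 * (\<Sum>x\<in>{-int n..-k}. a x)"

definition sU :: "int \<Rightarrow> ivec" where "sU k = vadd (dl (-k)) (dl k)"

lemma U_mop: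
  assumes q0: "(q::'k::field) \<noteq> 0" and k: "1 \<le> k" "k \<le> int n"
  shows "tau q n (-k) (-2) \<circ> fXnegL q n k \<circ> fXposR q n k = mop (\<lambda>a. q powi (cUe n k a)) (sU k)"
  using k apply (simp add: fXnegL_def fXposR_def tau_mop[OF q0] Lam_mop[OF q0] mu_mop xLneg_mop xRpos_mop mop_comp_o sU_def comp_assoc)
  apply (rule mop_cong)
  using q0 k apply (simp add: cUe_def vadd_def sum.distrib sum_subtractf sum_negf sum_dl sum_dl_neg dl_def power_int_add[symmetric] mult.assoc algebra_simps)
  done


lemma nonneg_sU[simp]: "nonneg (sU k)" by (simp add: sU_def)

definition cP :: "'k::field \<Rightarrow> nat \<Rightarrow> int \<Rightarrow> int \<Rightarrow> ivec \<Rightarrow> 'k" where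
  "cP q n i k a = q ^ nat (k - i) * q powi (cUe n k a + 2 * (\<Sum>x\<in>{-int n..-i}. a x) + 2)"

lemma Psi_sum:
  assumes q0: "(q::'k::field) \<noteq> 0" and i: "1 \<le> i" "i \<le> int n + 1"
  shows "Psi q n i g b = (\<Sum>k\<in>{i..int n}. mop (cP q n i k) (sU k) g b)"
proof (cases "i = int n + 1")
  case True
  then show ?thesis by (simp add: Psi_def)
next
  case False
  have inner: "(\<lambda>b. \<Sum>k\<in>{i..int n}. q ^ nat (k - i) * (tau q n (-k) (-2) \<circ> fXnegL q n k \<circ> fXposR q n k) g b)
     = (\<lambda>b. \<Sum>k\<in>{i..int n}. mop (\<lambda>a. q ^ nat (k - i) * q powi (cUe n k a)) (sU k) g b)"
    using i by (intro ext sum.cong refl) (simp add: U_mop[OF q0] mop_scal)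
  have "Psi q n i g b = tau q n (-i) 2 (\<lambda>b. \<Sum>k\<in>{i..int n}. q ^ nat (k - i) * (tau q n (-k) (-2) \<circ> fXnegL q n k \<circ> fXposR q n k) g b) b"
    using False by (simp add: Psi_def)
  also have "\<dots> = (\<Sum>k\<in>{i..int n}. mop (\<lambda>a. q powi (2 * (\<Sum>x\<in>{-int n..-i}. a x))) (\<lambda>_. 0) (mop (\<lambda>a. q ^ nat (k - i) * q powi (cUe n k a)) (sU k) g) b)"
    unfolding inner using i by (simp add: tau_mop[OF q0] mop_sum)
  also have "\<dots> = (\<Sum>k\<in>{i..int n}. mop (cP q n i k) (sU k) g b)"
  proof (rule sum.cong[OF refl])
    fix k assume k: "k \<in> {i..int n}"
    show "mop (\<lambda>a. q powi (2 * (\<Sum>x\<in>{-int n..-i}. a x))) (\<lambda>_. 0) (mop (\<lambda>a. q ^ nat (k - i) * q powi (cUe n k a)) (sU k) g) b = mop (cP q n i k) (sU k) g b"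
      apply (simp add: mop_comp)
      apply (rule fun_cong[where x=b], rule fun_cong[where x=g])
      apply (rule mop_cong)
      using q0 k i apply (simp add: cP_def sU_def vadd_def sum.distrib sum_subtractf sum_negf sum_dl sum_dl_neg dl_def power_int_add[symmetric] mult.assoc algebra_simps)
      done
  qed
  finally show ?thesis .
qed


definition sh :: "int \<Rightarrow> int \<Rightarrow> ivec" where "sh j l = vadd (sU l) (\<lambda>y. - dl j y)"

lemma sh_jj: "sh j j = dl (-j)"
  by (simp add: sh_def sU_def vadd_def fun_eq_iff)
lemma sh_swap: "vadd (\<lambda>y. - dl j y) (sU k) = sh j k"
  by (simp add: sh_def sU_def vadd_def fun_eq_iff)

lemma wf_cD: "wf (cD q n j) (\<lambda>y. - dl j y)"
  by (rule wf_j[of j]) (auto simp: dl_def cD_def)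

lemma sh_nonneg: "x \<noteq> j \<Longrightarrow> 0 \<le> sh j l x" "-1 \<le> sh j l j"
  by (auto simp: sh_def sU_def vadd_def dl_def)

lemma wf_sh[simp]: "(\<And>a. a j = 0 \<Longrightarrow> c a = 0) \<Longrightarrow> wf c (sh j l)"
  by (rule wf_j[of j]) (auto simp: sh_nonneg)

lemma cD_zero[simp]: "a j = 0 \<Longrightarrow> cD q n j a = 0"
  by (simp add: cD_def)

lemma mop_plus: "mop c s (\<lambda>b. g1 b + g2 b) b0 = mop c s g1 b0 + mop c s g2 b0"
  by (simp add: mop_def algebra_simps)
lemma mop_smul: "mop c s (\<lambda>b. v * g b) b0 = v * mop c s g b0"
  by (simp add: mop_def algebra_simps)

lemma X_step1:
  assumes q0: "(q::'k::field) \<noteq> 0" and j: "1 \<le> j" "j \<le> int n"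
  shows "fXnegR q n j g b = q ^ nat j * (mop (\<lambda>a. q powi (2 * (\<Sum>x\<in>{1-j..-1}. a x))) (\<lambda>_. 0) (mop (\<lambda>a. q powi ((\<Sum>l\<in>{j+1..int n}. a (-l)) + a (-j) + 1 + a j)) (dl (-j)) g) b
     + (q - inverse q) * (\<Sum>l\<in>{j+1..int n}. mop (\<lambda>a. q powi (2 * (\<Sum>x\<in>{1-j..-1}. a x))) (\<lambda>_. 0)
         (mop (\<lambda>a. q powi (2 * a (-j))) (\<lambda>_. 0) (mop (cP q n (j+1) l) (sU l) (mop (cD q n j) (\<lambda>y. - dl j y) g))) b))"
proof -
  have L: "Lam q (1 - j) 2 = mop (\<lambda>a. q powi (2 * (\<Sum>x\<in>{1-j..-1}. a x))) (\<lambda>_. 0)"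
    using j by (cases "j = 1") (simp_all add: Lam_mop[OF q0])
  have A: "mu q j 2 \<circ> fXnegL q n j = mop (\<lambda>a. q powi ((\<Sum>l\<in>{j+1..int n}. a (-l)) + a (-j) + 1 + a j)) (dl (-j))"
    using j apply (simp add: fXnegL_def mu_mop xLneg_mop mop_comp_o comp_assoc)
    apply (rule mop_cong)
    using q0 j apply (simp add: vadd_def dl_def power_int_add[symmetric] mult.assoc algebra_simps)
    done
  have B: "(mu q (-j) 2 \<circ> Psi q n (j + 1) \<circ> fD q n j) g b' = (\<Sum>l\<in>{j+1..int n}. mop (\<lambda>a. q powi (2 * a (-j))) (\<lambda>_. 0) (mop (cP q n (j+1) l) (sU l) (mop (cD q n j) (\<lambda>y. - dl j y) g)) b')" for b'
  proof -
    have "Psi q n (j + 1) (fD q n j g) = (\<lambda>b. \<Sum>l\<in>{j+1..int n}. mop (cP q n (j+1) l) (sU l) (mop (cD q n j) (\<lambda>y. - dl j y) g) b)"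
      using j by (intro ext) (simp add: Psi_sum[OF q0] fD_mop[OF q0])
    then show ?thesis by (simp add: mu_mop mop_sum)
  qed
  show ?thesis
    unfolding fXnegR_def L B by (simp add: A mop_plus mop_smul mop_sum)
qed


definition alA :: "'k::field \<Rightarrow> nat \<Rightarrow> int \<Rightarrow> ivec \<Rightarrow> 'k" where
  "alA q n j a = q ^ nat j * q powi ((\<Sum>l\<in>{j+1..int n}. a (-l)) + a (-j) + 1 + a j + 2 * (\<Sum>x\<in>{1-j..-1}. a x))"

definition alB :: "'k::field \<Rightarrow> nat \<Rightarrow> int \<Rightarrow> int \<Rightarrow> ivec \<Rightarrow> 'k" where
  "alB q n j l a = q ^ nat j * (q - inverse q) * q ^ nat (l - j - 1) * qint q (a j) *
     q powi (1 - (\<Sum>x\<in>{1..j-1}. a x) - (\<Sum>x\<in>{1..int n}. a x) + cUe n l a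
       + 2 * (\<Sum>x\<in>{-int n..-(j+1)}. a x) + 2 * a (-j) + 2 * (\<Sum>x\<in>{1-j..-1}. a x))"

definition alpha :: "'k::field \<Rightarrow> nat \<Rightarrow> int \<Rightarrow> int \<Rightarrow> ivec \<Rightarrow> 'k" where
  "alpha q n j l = (if l = j then alA q n j else alB q n j l)"

lemma X_sum:
  assumes q0: "(q::'k::field) \<noteq> 0" and j: "1 \<le> j" "j \<le> int n"
  shows "fXnegR q n j g b = (\<Sum>l\<in>{j..int n}. mop (alpha q n j l) (sh j l) g b)"
proof -
  have TA: "q ^ nat j * mop (\<lambda>a. q powi (2 * (\<Sum>x\<in>{1-j..-1}. a x))) (\<lambda>_. 0) (mop (\<lambda>a. q powi ((\<Sum>l\<in>{j+1..int n}. a (-l)) + a (-j) + 1 + a j)) (dl (-j)) g) b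
     = mop (alpha q n j j) (sh j j) g b"
    unfolding sh_jj alpha_def
    apply (simp add: mop_comp mop_scal)
    apply (rule fun_cong[where x=b], rule fun_cong[where x=g])
    apply (rule mop_cong)
    using q0 j apply (simp add: alA_def vadd_def dl_def sum.distrib sum_dl sum_dl_neg power_int_add[symmetric] mult.assoc algebra_simps)
    done
  have TB: "q ^ nat j * ((q - inverse q) * mop (\<lambda>a. q powi (2 * (\<Sum>x\<in>{1-j..-1}. a x))) (\<lambda>_. 0)
         (mop (\<lambda>a. q powi (2 * a (-j))) (\<lambda>_. 0) (mop (cP q n (j+1) l) (sU l) (mop (cD q n j) (\<lambda>y. - dl j y) g))) b)
      = mop (alpha q n j l) (sh j l) g b" if l: "l \<in> {j+1..int n}" for l
    using l unfolding alpha_def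
    apply (simp add: mop_comp wf_cD sh_def[symmetric])
    apply (simp add: mop_comp mop_scal)
    apply (rule fun_cong[where x=b], rule fun_cong[where x=g])
    apply (rule mop_cong)
    using q0 j apply (simp add: alB_def cP_def cD_def cUe_def sh_def sU_def vadd_def dl_def sum.distrib sum_subtractf sum_negf sum_dl sum_dl_neg power_int_add[symmetric] mult.assoc algebra_simps)
    done
  have "{j..int n} = insert j {j+1..int n}" using j by auto
  then have "(\<Sum>l\<in>{j..int n}. mop (alpha q n j l) (sh j l) g b) = mop (alpha q n j j) (sh j j) g b
     + (\<Sum>l\<in>{j+1..int n}. mop (alpha q n j l) (sh j l) g b)" by simp
  also have "(\<Sum>l\<in>{j+1..int n}. mop (alpha q n j l) (sh j l) g b) = (\<Sum>l\<in>{j+1..int n}. q ^ nat j * ((q - inverse q) * mop (\<lambda>a. q powi (2 * (\<Sum>x\<in>{1-j..-1}. a x))) (\<lambda>_. 0)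
         (mop (\<lambda>a. q powi (2 * a (-j))) (\<lambda>_. 0) (mop (cP q n (j+1) l) (sU l) (mop (cD q n j) (\<lambda>y. - dl j y) g))) b))"
    by (rule sum.cong[OF refl]) (rule TB[symmetric])
  also have "\<dots> = q ^ nat j * ((q - inverse q) * (\<Sum>l\<in>{j+1..int n}. mop (\<lambda>a. q powi (2 * (\<Sum>x\<in>{1-j..-1}. a x))) (\<lambda>_. 0)
         (mop (\<lambda>a. q powi (2 * a (-j))) (\<lambda>_. 0) (mop (cP q n (j+1) l) (sU l) (mop (cD q n j) (\<lambda>y. - dl j y) g))) b))"
    by (simp only: sum_distrib_left[of "q ^ nat j"] sum_distrib_left[of "q - inverse q"])
  finally show ?thesis unfolding X_step1[OF q0 j] TA[symmetric] by (simp only: distrib_left)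
qed


definition nru :: "'k::field \<Rightarrow> bool" where
  "nru q \<longleftrightarrow> q \<noteq> 0 \<and> (\<forall>m::nat. m > 0 \<longrightarrow> q ^ m \<noteq> 1)"

lemma nru_0: "nru q \<Longrightarrow> q \<noteq> 0" by (simp add: nru_def)

lemma powi_inj:
  assumes "nru q"
  shows "(q powi x = q powi y) \<longleftrightarrow> x = y"
proof
  assume h: "q powi x = q powi y"
  have q0: "q \<noteq> 0" using assms nru_0 by blast
  have "q powi (x - y) = 1" using h q0 by (simp add: power_int_diff)
  show "x = y"
  proof (rule ccontr)
    assume "x \<noteq> y"
    then consider "x - y > 0" | "y - x > 0" by linarith
    then show False
    proof cases
      case 1
      then have "q ^ nat (x - y) = 1" using \<open>q powi (x - y) = 1\<close>
        by (metis nat_0_le order_less_imp_le power_int_of_nat)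
      with 1 assms show False unfolding nru_def by (metis zero_less_nat_eq)
    next
      case 2
      have "q powi (y - x) = 1" using \<open>q powi (x - y) = 1\<close>
        by (metis inverse_1 minus_diff_eq power_int_minus)
      then have "q ^ nat (y - x) = 1"
        by (metis 2 nat_0_le order_less_imp_le power_int_of_nat)
      with 2 assms show False unfolding nru_def by (metis zero_less_nat_eq)
    qed
  qed
qed simp

lemma nru_d: "nru q \<Longrightarrow> q - inverse q \<noteq> 0"
proof
  assume h: "nru q" "q - inverse q = 0"
  then have q0: "q \<noteq> 0" by (simp add: nru_def)
  have "q * q = q * inverse q" using h(2) by simp
  then have "q ^ 2 = 1" using q0 by (simp add: power2_eq_square)
  with h(1) show False unfolding nru_def by (metis zero_less_numeral)
qed

lemma qint_step:
  assumes q0: "(q::'k::field) \<noteq> 0" and d: "q - inverse q \<noteq> 0"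
  shows "qint q (m + 1) - q * qint q m = q powi (- m)"
proof -
  have e1: "q powi (m + 1) = q powi m * q" using q0 by (simp add: power_int_add)
  have e2: "q powi (- (m + 1)) = q powi (- m) * inverse q" using q0
    by (metis minus_add_distrib power_int_add power_int_minus power_int_1_right add_uminus_conv_diff)
  have "qint q (m + 1) - q * qint q m = (q powi (m + 1) - q powi (- (m + 1)) - q * (q powi m - q powi (- m))) / (q - inverse q)"
    unfolding qint_def by (simp add: diff_divide_distrib right_diff_distrib)
  also have "\<dots> = (q powi (- m) * (q - inverse q)) / (q - inverse q)"
    unfolding e1 e2 by (simp add: algebra_simps)
  also have "\<dots> = q powi (- m)" using d by simp
  finally show ?thesis .
qed

lemma cP_sD:
  assumes q0: "nru (q::'k::field)" and "1 \<le> i" "i \<le> k" "k \<le> int n" "1 \<le> j" "j \<le> int n"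
  shows "cP q n i k (vadd a (\<lambda>y. - dl j y)) = q powi (if k < j then -1 else if k = j then -1 else -2) * cP q n i k a"
  using assms nru_0[OF q0] by (simp add: cP_def cUe_def vadd_def dl_def sum.distrib sum_subtractf sum_negf sum_dl sum_dl_neg power_int_add[symmetric] mult.assoc algebra_simps powi_inj)

lemma cD_sU:
  assumes q0: "nru (q::'k::field)" and "1 \<le> k" "k \<le> int n" "1 \<le> j" "j \<le> int n" "k \<noteq> j"
  shows "cD q n j (vadd a (sU k)) = q powi (if k < j then -2 else -1) * cD q n j a"
  using assms nru_0[OF q0] by (simp add: cD_def sU_def vadd_def dl_def sum.distrib sum_subtractf sum_negf sum_dl sum_dl_neg power_int_add[symmetric] mult.assoc algebra_simps powi_inj)

lemma cD_sUj:
  assumes q0: "nru (q::'k::field)" and "1 \<le> j" "j \<le> int n"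
  shows "cD q n j (vadd a (sU j)) = qint q (a j + 1) * q powi (- (\<Sum>x\<in>{1..j-1}. a x) - (\<Sum>x\<in>{1..int n}. a x))"
  using assms nru_0[OF q0] by (simp add: cD_def sU_def vadd_def dl_def sum.distrib sum_subtractf sum_negf sum_dl sum_dl_neg power_int_add[symmetric] mult.assoc algebra_simps powi_inj)


definition gamA :: "'k::field \<Rightarrow> nat \<Rightarrow> int \<Rightarrow> int \<Rightarrow> int \<Rightarrow> ivec \<Rightarrow> 'k" where
  "gamA q n i j k a = (inverse (q ^ 2) - 1) * (cP q n i k a * cD q n j a)"
definition gamB :: "'k::field \<Rightarrow> nat \<Rightarrow> int \<Rightarrow> int \<Rightarrow> ivec \<Rightarrow> 'k" where
  "gamB q n i j a = cP q n i j a * q powi (- (\<Sum>x\<in>{1..j-1}. a x) - (\<Sum>x\<in>{1..int n}. a x) - a j)"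
definition gamma :: "'k::field \<Rightarrow> nat \<Rightarrow> int \<Rightarrow> int \<Rightarrow> int \<Rightarrow> ivec \<Rightarrow> 'k" where
  "gamma q n i j k = (if k < j then gamA q n i j k else if k = j then gamB q n i j else (\<lambda>_. 0))"

lemma gamma_coef:
  assumes q0: "nru (q::'k::field)" and ij: "1 \<le> i" "i \<le> j" "j \<le> int n" and k: "i \<le> k" "k \<le> int n"
  shows "cP q n i k a * cD q n j (vadd a (sU k)) - q * (cD q n j a * cP q n i k (vadd a (\<lambda>y. - dl j y)))
     = gamma q n i j k a"
proof -
  have qn: "q \<noteq> 0" using nru_0[OF q0] .
  consider "k < j" | "k = j" | "k > j" by linarith
  then show ?thesis
  proof cases
    case 1
    have qu: "q * inverse q = 1" using qn by simp
    have "cP q n i k a * cD q n j (vadd a (sU k)) - q * (cD q n j a * cP q n i k (vadd a (\<lambda>y. - dl j y)))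
      = cP q n i k a * (inverse q ^ 2 * cD q n j a) - q * (cD q n j a * (inverse q * cP q n i k a))"
      using 1 ij k by (simp add: cD_sU[OF q0] cP_sD[OF q0] power_int_minus power_inverse)
    also have "\<dots> = (inverse q ^ 2 - 1) * (cP q n i k a * cD q n j a)"
      using qu by algebra
    finally show ?thesis using 1 by (simp add: gamma_def gamA_def power_inverse)
  next
    case 2
    define X where "X = q powi (- (\<Sum>x\<in>{1..j-1}. a x) - (\<Sum>x\<in>{1..int n}. a x))"
    have cDa: "cD q n j a = qint q (a j) * (q * X)"
    proof -
      have "q powi ((- (\<Sum>x\<in>{1..j-1}. a x) - (\<Sum>x\<in>{1..int n}. a x)) + 1) = q powi (- (\<Sum>x\<in>{1..j-1}. a x) - (\<Sum>x\<in>{1..int n}. a x)) * q"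
        using qn by (rule power_int_add_1[OF disjI1])
      moreover have "(- (\<Sum>x\<in>{1..j-1}. a x) - (\<Sum>x\<in>{1..int n}. a x)) + 1 = 1 - (\<Sum>x\<in>{1..j-1}. a x) - (\<Sum>x\<in>{1..int n}. a x)" by simp
      ultimately show ?thesis unfolding cD_def X_def by (simp add: mult.commute)
    qed
    have st: "qint q (a j + 1) = q * qint q (a j) + q powi (- a j)"
      using qint_step[OF qn nru_d[OF q0], of "a j"] by (simp add: algebra_simps)
    have "cP q n i k a * cD q n j (vadd a (sU k)) - q * (cD q n j a * cP q n i k (vadd a (\<lambda>y. - dl j y)))
        = cP q n i j a * (qint q (a j + 1) * X) - q * (qint q (a j) * (q * X) * (q powi (-1) * cP q n i j a))"
      using 2 ij k by (simp add: cD_sUj[OF q0] cP_sD[OF q0] cDa X_def)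
    also have "\<dots> = cP q n i j a * X * q powi (- a j)"
      unfolding st using qn by (simp add: power_int_minus algebra_simps)
    also have "\<dots> = gamma q n i j k a"
      unfolding gamma_def gamB_def X_def using 2 qn by (simp add: power_int_add[symmetric] mult.assoc)
    finally show ?thesis .
  next
    case 3
    have qu: "q * inverse q = 1" using qn by simp
    have "cP q n i k a * cD q n j (vadd a (sU k)) - q * (cD q n j a * cP q n i k (vadd a (\<lambda>y. - dl j y)))
      = cP q n i k a * (inverse q * cD q n j a) - q * (cD q n j a * (inverse q ^ 2 * cP q n i k a))"
      using 3 ij k by (simp add: cD_sU[OF q0] cP_sD[OF q0] power_int_minus power_inverse)
    also have "\<dots> = 0"
      using qu by algebra
    finally show ?thesis using 3 by (simp add: gamma_def)
  qed
qed


lemma C_sum: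
  assumes q0: "nru (q::'k::field)" and ij: "1 \<le> i" "i \<le> j" "j \<le> int n"
  shows "qcomm q (fD q n j) (Psi q n i) g b = (\<Sum>k\<in>{i..j}. mop (gamma q n i j k) (sh j k) g b)"
proof -
  have qn: "q \<noteq> 0" using nru_0[OF q0] .
  have P: "Psi q n i g' = (\<lambda>b. \<Sum>k\<in>{i..int n}. mop (cP q n i k) (sU k) g' b)" for g'
    using ij by (intro ext) (simp add: Psi_sum[OF qn])
  have t1: "fD q n j (Psi q n i g) b = (\<Sum>k\<in>{i..int n}. mop (\<lambda>a. cP q n i k a * cD q n j (vadd a (sU k))) (sh j k) g b)"
    using ij by (simp add: P fD_mop[OF qn] mop_sum mop_comp sh_swap)
  have t2: "Psi q n i (fD q n j g) b = (\<Sum>k\<in>{i..int n}. mop (\<lambda>a. cD q n j a * cP q n i k (vadd a (\<lambda>y. - dl j y))) (sh j k) g b)"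
    using ij by (simp add: Psi_sum[OF qn] fD_mop[OF qn] mop_comp wf_cD sh_def[symmetric])
  have "qcomm q (fD q n j) (Psi q n i) g b = (\<Sum>k\<in>{i..int n}. mop (\<lambda>a. cP q n i k a * cD q n j (vadd a (sU k))) (sh j k) g b
      - q * mop (\<lambda>a. cD q n j a * cP q n i k (vadd a (\<lambda>y. - dl j y))) (sh j k) g b)"
    unfolding qcomm_def t1 t2 by (simp add: sum_subtractf sum_distrib_left)
  also have "\<dots> = (\<Sum>k\<in>{i..int n}. mop (gamma q n i j k) (sh j k) g b)"
  proof (rule sum.cong[OF refl])
    fix k assume k: "k \<in> {i..int n}"
    show "mop (\<lambda>a. cP q n i k a * cD q n j (vadd a (sU k))) (sh j k) g b
      - q * mop (\<lambda>a. cD q n j a * cP q n i k (vadd a (\<lambda>y. - dl j y))) (sh j k) g b = mop (gamma q n i j k) (sh j k) g b"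
      unfolding mop_lin
      apply (rule fun_cong[where x=b], rule fun_cong[where x=g], rule mop_cong)
      using k ij by (simp add: gamma_coef[OF q0])
  qed
  also have "\<dots> = (\<Sum>k\<in>{i..j}. mop (gamma q n i j k) (sh j k) g b)"
    using ij by (intro sum.mono_neutral_right) (auto intro!: mop_zero simp: gamma_def)
  finally show ?thesis .
qed



lemmas U = gamA_def gamB_def cP_def cD_def cUe_def alA_def alB_def sh_def sU_def vadd_def dl_def
  sum.distrib sum_subtractf sum_negf sum_dl sum_dl_neg

lemma pw1:
  assumes q0: "nru (q::'k::field)" and "1 \<le> i" "i \<le> k" "k < j" "j \<le> int n"
  shows "gamA q n i j k a * alA q n j (vadd a (sh j k)) = alA q n j a * gamA q n i j k (vadd a (sh j j))"
  using assms nru_0[OF q0] by (simp add: U power_int_add[symmetric] mult_ac powi_inj)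


lemma pw2:
  assumes q0: "nru (q::'k::field)" and "1 \<le> i" "i \<le> k" "k < j" "j < l" "l \<le> int n"
  shows "gamA q n i j k a * alB q n j l (vadd a (sh j k)) = alB q n j l a * gamA q n i j k (vadd a (sh j l))"
  using assms nru_0[OF q0] by (simp add: U power_int_add[symmetric] mult_ac powi_inj)

lemma pw3:
  assumes q0: "nru (q::'k::field)" and "1 \<le> i" "i \<le> j" "j \<le> int n"
  shows "gamB q n i j a * alA q n j (vadd a (sh j j)) = alA q n j a * gamB q n i j (vadd a (sh j j))"
  using assms nru_0[OF q0] by (simp add: U power_int_add[symmetric] mult_ac powi_inj)

lemma pw4:
  assumes q0: "nru (q::'k::field)" and "1 \<le> i" "i \<le> j" "j < l" "l \<le> int n"
  shows "gamB q n i j a * alB q n j l (vadd a (sh j j)) = alB q n j l a * gamB q n i j (vadd a (sh j l))"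
  using assms nru_0[OF q0] by (simp add: U power_int_add[symmetric] mult_ac powi_inj)


lemma vadd_comm: "vadd s t = vadd t s"
  by (simp add: vadd_def fun_eq_iff add.commute)

lemma wf_gamma:
  assumes "k \<le> j"
  shows "wf (gamma q n i j k) (sh j k)"
proof (cases "k = j")
  case True then show ?thesis by (simp add: sh_jj)
next
  case False then show ?thesis using assms by (intro wf_sh) (simp add: gamma_def gamA_def)
qed

lemma wf_alpha: "wf (alpha q n j l) (sh j l)"
proof (cases "l = j")
  case True then show ?thesis by (simp add: sh_jj)
next
  case False then show ?thesis by (intro wf_sh) (simp add: alpha_def alB_def)
qed

lemma pair_comm:
  assumes q0: "nru (q::'k::field)" and "1 \<le> i" "i \<le> k" "k \<le> j" "j \<le> l" "l \<le> int n"
  shows "mop (alpha q n j l) (sh j l) (mop (gamma q n i j k) (sh j k) g)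
       = mop (gamma q n i j k) (sh j k) (mop (alpha q n j l) (sh j l) g)"
proof -
  have "mop (\<lambda>a. gamma q n i j k a * alpha q n j l (vadd a (sh j k))) (vadd (sh j l) (sh j k))
      = mop (\<lambda>a. alpha q n j l a * gamma q n i j k (vadd a (sh j l))) (vadd (sh j l) (sh j k))"
  proof (rule mop_cong)
    fix a :: ivec
    consider "k < j" "l = j" | "k < j" "j < l" | "k = j" "l = j" | "k = j" "j < l" using assms by linarith
    then show "gamma q n i j k a * alpha q n j l (vadd a (sh j k)) = alpha q n j l a * gamma q n i j k (vadd a (sh j l))"
    proof cases
      case 1 then show ?thesis using pw1[OF q0, of i k j n a] assms by (simp add: gamma_def alpha_def)
    next
      case 2 then show ?thesis using pw2[OF q0, of i k j l n a] assms by (simp add: gamma_def alpha_def)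
    next
      case 3 then show ?thesis using pw3[OF q0, of i j n a] assms by (simp add: gamma_def alpha_def)
    next
      case 4 then show ?thesis using pw4[OF q0, of i j l n a] assms by (simp add: gamma_def alpha_def)
    qed
  qed
  then show ?thesis
    using assms by (simp add: mop_comp wf_gamma wf_alpha vadd_comm[of "sh j k"])
qed

theorem corollary5p5:
  fixes q :: "'k::field_char_0" and n :: nat and i j :: int
  assumes "n \<ge> 2"
    and "q \<noteq> 0"
    and "\<forall>m::nat. m > 0 \<longrightarrow> q ^ m \<noteq> 1"
    and "1 \<le> i" and "i \<le> j" and "j \<le> int n"
    and "f \<in> Xspace n"
  shows "qcomm 1 (fXnegR q n j) (qcomm q (fD q n j) (Psi q n i)) f = (\<lambda>b. 0)"
proof
  fix b :: "int \<Rightarrow> nat"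
  have q0: "nru q" using assms(2,3) by (simp add: nru_def)
  have j1: "1 \<le> j" using assms by linarith
  have qn: "q \<noteq> 0" by (rule assms(2))
  have C: "qcomm q (fD q n j) (Psi q n i) g = (\<lambda>b. \<Sum>k\<in>{i..j}. mop (gamma q n i j k) (sh j k) g b)" for g
    using assms by (intro ext) (simp add: C_sum[OF q0])
  have X: "fXnegR q n j g = (\<lambda>b. \<Sum>l\<in>{j..int n}. mop (alpha q n j l) (sh j l) g b)" for g
    using assms j1 by (intro ext) (simp add: X_sum[OF qn])
  have "fXnegR q n j (qcomm q (fD q n j) (Psi q n i) f) b
      = (\<Sum>l\<in>{j..int n}. \<Sum>k\<in>{i..j}. mop (alpha q n j l) (sh j l) (mop (gamma q n i j k) (sh j k) f) b)"
    unfolding C X by (simp add: mop_sum)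
  also have "\<dots> = (\<Sum>l\<in>{j..int n}. \<Sum>k\<in>{i..j}. mop (gamma q n i j k) (sh j k) (mop (alpha q n j l) (sh j l) f) b)"
    using assms by (intro sum.cong refl) (simp add: pair_comm[OF q0])
  also have "\<dots> = (\<Sum>k\<in>{i..j}. \<Sum>l\<in>{j..int n}. mop (gamma q n i j k) (sh j k) (mop (alpha q n j l) (sh j l) f) b)"
    by (rule sum.swap)
  also have "\<dots> = qcomm q (fD q n j) (Psi q n i) (fXnegR q n j f) b"
    unfolding C X by (simp add: mop_sum)
  finally show "qcomm 1 (fXnegR q n j) (qcomm q (fD q n j) (Psi q n i)) f b = 0"
    by (simp add: qcomm_def)
qed

end
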